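(* Let $k\ge 2$, let $F$ be a $k$-partite $k$-graph with $\gcd(\mathcal{S}(F))=1$ and $v(F)=f$, and suppose $1/n\ll\mu\ll\lambda\ll p,\zeta<1$. If $H$ is an $(n,p,\mu,\cdot)$ $k$-graph and $\mathcal{P}=\{X,Y\}$ is a partition of $V(H)$ with $|X|,|Y|\ge\zeta n$, then $(1,-1)\in L^\lambda_{\mathcal{P},F}(H)$.
   Context: The notation $a\ll b$ in a hierarchy means the statement holds whenever constants are chosen from right to left, each sufficiently small (and $n$ sufficiently large) in terms of those to its right (and of $F$, $k$). A $k$-partite realisation of a $k$-graph $F$ is a partition of $V(F)$ into classes $V_1,\dots,V_k$ with $|e\cap V_i|=1$ for all $e\in E(F)$, $i\in[k]$; $F$ is $k$-partite if it has one. $\mathcal{S}(F)=\bigcup_\chi\{|V_1|,\dots,|V_k|\}$, the union over all $k$-partite realisations $\chi=(V_1,\dots,V_k)$ of $F$. An $(n,p,\mu,\cdot)$ $k$-graph is a $k$-graph $H$ on a vertex set $V$ with $|V|=n$ such that for all $X_1,\dots,X_k\subseteq V$, the number of $k$-tuples $(x_1,\dots,x_k)\in X_1\times\cdots\times X_k$ with $\{x_1,\dots,x_k\}\in E(H)$ is at least $p|X_1|\cdots|X_k|-\mu n^k$. For a partition $\mathcal{P}=\{X,Y\}$ of $V(H)$ and $S\subseteq V(H)$, $\mathbf{i}_{\mathcal{P}}(S)=(|S\cap X|,|S\cap Y|)$. For $\lambda>0$, a vector $\mathbf{v}\in\mathbb{Z}^2$ with nonnegative coordinates summing to $f$ is a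 $\lambda$-robust $F$-vector if at least $\lambda n^f$ copies $F'$ of $F$ in $H$ have $\mathbf{i}_{\mathcal{P}}(V(F'))=\mathbf{v}$; $L^\lambda_{\mathcal{P},F}(H)$ is the lattice generated by all $\lambda$-robust $F$-vectors. *)

theory Defs
  imports Complex_Main "HOL-Library.FuncSet"
begin

definition is_kgraph :: "nat \<Rightarrow> 'a set \<Rightarrow> 'a set set \<Rightarrow> bool" where
  "is_kgraph k V E \<longleftrightarrow> finite V \<and> (\<forall>e\<in>E. e \<subseteq> V \<and> card e = k)"

definition kpartite_realisation :: "nat \<Rightarrow> 'b set \<Rightarrow> 'b set set \<Rightarrow> ('b \<Rightarrow> nat) \<Rightarrow> bool" where
  "kpartite_realisation k VF EF c \<longleftrightarrow>
     (\<forall>v\<in>VF. c v < k) \<and> (\<forall>e\<in>EF. \<forall>i<k. card {v\<in>e. c v = i} = 1)"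

definition is_kpartite :: "nat \<Rightarrow> 'b set \<Rightarrow> 'b set set \<Rightarrow> bool" where
  "is_kpartite k VF EF \<longleftrightarrow> (\<exists>c. kpartite_realisation k VF EF c)"

definition class_sizes :: "nat \<Rightarrow> 'b set \<Rightarrow> 'b set set \<Rightarrow> nat set" where
  "class_sizes k VF EF =
     {card {v\<in>VF. c v = i} | c i. kpartite_realisation k VF EF c \<and> i < k}"

definition npmu_graph :: "nat \<Rightarrow> nat \<Rightarrow> real \<Rightarrow> real \<Rightarrow> 'a set \<Rightarrow> 'a set set \<Rightarrow> bool" where
  "npmu_graph k n p \<mu> V E \<longleftrightarrow> is_kgraph k V E \<and> card V = n \<and>
     (\<forall>Xs. (\<forall>i<k. Xs i \<subseteq> V) \<longrightarrow>
        real (card {x \<in> Pi\<^sub>E {..<k} Xs. x ` {..<k} \<in> E})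
          \<ge> p * (\<Prod>i<k. real (card (Xs i))) - \<mu> * real n ^ k)"

definition copies :: "'b set \<Rightarrow> 'b set set \<Rightarrow> 'a set \<Rightarrow> 'a set set \<Rightarrow> ('a set \<times> 'a set set) set" where
  "copies VF EF V E = {(V', E'). V' \<subseteq> V \<and> E' \<subseteq> E \<and>
       (\<exists>\<phi>. bij_betw \<phi> VF V' \<and> E' = (\<lambda>e. \<phi> ` e) ` EF)}"

definition robust_vectors ::
  "real \<Rightarrow> 'b set \<Rightarrow> 'b set set \<Rightarrow> 'a set \<Rightarrow> 'a set set \<Rightarrow> 'a set \<Rightarrow> 'a set \<Rightarrow> (int \<times> int) set" where
  "robust_vectors lam VF EF V E X Y =
     {(int a, int b) | a b. a + b = card VF \<and>
        real (card {F' \<in> copies VF EF V E. card (fst F' \<inter> X) = a \<and> card (fst F' \<inter> Y) = b})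
          \<ge> lam * real (card V) ^ card VF}"

definition int_lattice :: "(int \<times> int) set \<Rightarrow> (int \<times> int) set" where
  "int_lattice S = {((\<Sum>v\<in>T. c v * fst v), (\<Sum>v\<in>T. c v * snd v)) | T c. finite T \<and> T \<subseteq> S}"

end

theory Submission
  imports Defs "HOL-Analysis.Convex"
begin


lemma power_mean:
  fixes a :: "'c \<Rightarrow> real"
  assumes "finite A" "A \<noteq> {}" "\<And>x. x \<in> A \<Longrightarrow> a x \<ge> 0"
  shows "real (card A) * ((\<Sum>x\<in>A. a x) / real (card A)) ^ n \<le> (\<Sum>x\<in>A. a x ^ n)"
proof -
  have cv: "convex_on {0::real..} (\<lambda>x. x^n)"
  proof (cases "even n")
    case True then show ?thesis using convex_power_even convex_on_subset by blast
  next
    case False then show ?thesis using convex_power_odd by blast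
  qed
  have c: "card A > 0" using assms by (simp add: card_gt_0_iff)
  have "(\<Sum>x\<in>A. (1/real (card A)) *\<^sub>R a x) ^ n \<le> (\<Sum>x\<in>A. (1/real (card A)) * (a x)^n)"
    using convex_on_sum[OF assms(1,2) cv, where a="\<lambda>_. 1/real (card A)" and y=a] assms c by auto
  then have "((\<Sum>x\<in>A. a x) / real (card A)) ^ n \<le> (\<Sum>x\<in>A. (a x)^n) / real (card A)"
    by (simp add: sum_divide_distrib[symmetric] sum_distrib_left[symmetric] sum_distrib_right[symmetric] divide_inverse mult.commute)
  then show ?thesis using c by (simp add: field_simps)
qed

fun prodL :: "'a set list \<Rightarrow> 'a list set" where
  "prodL [] = {[]}"
| "prodL (Z#Zs) = (\<lambda>(x,ys). x#ys) ` (Z \<times> prodL Zs)"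

lemma prodL_mem: "ys \<in> prodL Zs \<longleftrightarrow> length ys = length Zs \<and> (\<forall>i<length Zs. ys!i \<in> Zs!i)"
proof (induction Zs arbitrary: ys)
  case Nil then show ?case by auto
next
  case (Cons Z Zs)
  show ?case
  proof
    assume "ys \<in> prodL (Z#Zs)" then show "length ys = length (Z#Zs) \<and> (\<forall>i<length (Z#Zs). ys!i \<in> (Z#Zs)!i)"
      using Cons by (auto simp: nth_Cons split: nat.splits)
  next
    assume h: "length ys = length (Z#Zs) \<and> (\<forall>i<length (Z#Zs). ys!i \<in> (Z#Zs)!i)"
    then obtain y ys' where ys: "ys = y#ys'" by (cases ys) auto
    have "y \<in> Z" using h ys by force
    moreover have "ys' \<in> prodL Zs" using Cons h ys by force
    ultimately show "ys \<in> prodL (Z#Zs)" using ys by force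
  qed
qed

lemma prodL_card: "card (prodL Zs) = prod_list (map card Zs)"
proof (induction Zs)
  case (Cons Z Zs)
  have "inj_on (\<lambda>(x,ys). x#ys) (Z \<times> prodL Zs)" by (auto simp: inj_on_def)
  then show ?case using Cons by (simp add: card_image card_cartesian_product)
qed simp

lemma prodL_finite: "\<forall>Z\<in>set Zs. finite Z \<Longrightarrow> finite (prodL Zs)"
  by (induction Zs) auto

definition Lz :: "'a set \<Rightarrow> nat \<Rightarrow> 'a list set" where
  "Lz Z s = {l. set l \<subseteq> Z \<and> length l = s}"

fun homs :: "'a list set \<Rightarrow> 'a set list \<Rightarrow> nat list \<Rightarrow> 'a list list set" where
  "homs G [] ss = (if [] \<in> G then {[]} else {})"
| "homs G (Z#Zs) ss = (\<Union>l \<in> Lz Z (hd ss). (#) l ` homs {ys. \<forall>x\<in>set l. x#ys \<in> G} Zs (tl ss))"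

lemma homs_finite: "\<forall>Z\<in>set Zs. finite Z \<Longrightarrow> finite (homs G Zs ss)"
proof (induction Zs arbitrary: G ss)
  case (Cons Z Zs)
  have "finite (Lz Z (hd ss))" unfolding Lz_def using Cons.prems by (simp add: finite_lists_length_eq)
  then show ?case using Cons by auto
qed simp

lemma homs_card_Cons: assumes "\<forall>Z'\<in>set (Z#Zs). finite Z'"
  shows "card (homs G (Z#Zs) ss) = (\<Sum>l\<in>Lz Z (hd ss). card (homs {ys. \<forall>x\<in>set l. x#ys \<in> G} Zs (tl ss)))"
proof -
  have f: "finite (Lz Z (hd ss))" unfolding Lz_def using assms by (simp add: finite_lists_length_eq)
  show ?thesis
    unfolding homs.simps
    apply (subst card_UN_disjoint)
    using f homs_finite assms apply (auto simp: card_image)[3]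
    apply (simp add: card_image)
    done
qed

definition W :: "'a set list \<Rightarrow> nat list \<Rightarrow> real" where
  "W Zs ss = prod_list (map (\<lambda>(Z,s). real (card Z) ^ s) (zip Zs ss))"

lemma card_filter_sum: "finite A \<Longrightarrow> card {x\<in>A. P x} = (\<Sum>x\<in>A. if P x then 1 else 0)"
  by (simp add: sum.inter_filter[symmetric])

lemma homs_lb:
  assumes "length ss = length Zs" "\<forall>Z\<in>set Zs. finite Z \<and> Z \<noteq> {}"
  shows "(real (card (G \<inter> prodL Zs)) / real (card (prodL Zs)))^(prod_list ss) * W Zs ss
           \<le> real (card (homs G Zs ss))"
  using assms
proof (induction Zs arbitrary: G ss)
  case Nil
  then show ?case by (auto simp: W_def)
next
  case (Cons Z Zs)
  obtain s ss' where ss: "ss = s#ss'" using Cons.prems by (cases ss) auto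
  have len: "length ss' = length Zs" using Cons.prems ss by simp
  have fin: "\<forall>Z\<in>set Zs. finite Z \<and> Z \<noteq> {}" and fZ: "finite Z" and neZ: "Z \<noteq> {}" using Cons.prems by auto
  define P' where "P' = prodL Zs"
  define M where "M = card P'"
  define L where "L = Lz Z s"
  define Gl where "Gl = (\<lambda>l. {ys. \<forall>x\<in>set l. x#ys \<in> G})"
  define T where "T = prod_list ss'"
  define W' where "W' = W Zs ss'"
  define z where "z = card Z"
  define cc where "cc = (\<lambda>ys. card {x\<in>Z. x#ys \<in> G})"
  have fP: "finite P'" unfolding P'_def using fin prodL_finite by auto
  have Mpos: "M > 0" unfolding M_def P'_def prodL_card using fin
    by (induction Zs) (auto simp: card_gt_0_iff)
  have zpos: "z > 0" using fZ neZ z_def by (simp add: card_gt_0_iff)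
  have fL: "finite L" unfolding L_def Lz_def using fZ by (simp add: finite_lists_length_eq)
  have cardL: "card L = z ^ s" unfolding L_def Lz_def z_def by (simp add: card_lists_length_eq fZ)
  have neL: "L \<noteq> {}" using cardL zpos by auto
  have W'pos: "W' \<ge> 0" unfolding W'_def W_def
    by (induction Zs ss' rule: list_induct2') (auto)
  have hc: "real (card (homs G (Z#Zs) ss)) = (\<Sum>l\<in>L. real (card (homs (Gl l) Zs ss')))"
    using homs_card_Cons[of Z Zs G ss] Cons.prems ss unfolding L_def Gl_def by simp
  define a where "a = (\<lambda>l. real (card (Gl l \<inter> P')) / real M)"
  have a0: "\<And>l. a l \<ge> 0" unfolding a_def by simp
  have IH: "\<And>l. a l ^ T * W' \<le> real (card (homs (Gl l) Zs ss'))"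
    using Cons.IH[OF len fin] unfolding a_def M_def P'_def T_def W'_def by blast
  have s1: "(\<Sum>l\<in>L. a l ^ T) * W' \<le> real (card (homs G (Z#Zs) ss))"
    unfolding hc sum_distrib_right using IH by (simp add: sum_mono)
  have dc1: "(\<Sum>l\<in>L. card (Gl l \<inter> P')) = (\<Sum>ys\<in>P'. cc ys ^ s)"
  proof -
    have "(\<Sum>l\<in>L. card (Gl l \<inter> P')) = (\<Sum>l\<in>L. \<Sum>ys\<in>P'. if ys \<in> Gl l then 1 else 0)"
      using fP by (auto intro!: sum.cong simp: card_filter_sum[symmetric] Int_def conj_commute)
    also have "\<dots> = (\<Sum>ys\<in>P'. \<Sum>l\<in>L. if ys \<in> Gl l then 1 else 0)" by (rule sum.swap)
    also have "\<dots> = (\<Sum>ys\<in>P'. card {l\<in>L. ys \<in> Gl l})" using fL by (simp add: card_filter_sum)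
    also have "\<dots> = (\<Sum>ys\<in>P'. cc ys ^ s)"
    proof (rule sum.cong)
      fix ys assume "ys \<in> P'"
      have "{l\<in>L. ys \<in> Gl l} = Lz {x\<in>Z. x#ys \<in> G} s" unfolding L_def Lz_def Gl_def by auto
      then show "card {l\<in>L. ys \<in> Gl l} = cc ys ^ s" unfolding cc_def Lz_def
        using fZ by (simp add: card_lists_length_eq)
    qed simp
    finally show ?thesis .
  qed
  have dc2: "(\<Sum>ys\<in>P'. cc ys) = card (G \<inter> prodL (Z#Zs))"
  proof -
    have e: "G \<inter> prodL (Z#Zs) = (\<lambda>(ys,x). x#ys) ` (SIGMA ys:P'. {x\<in>Z. x#ys \<in> G}) "
      unfolding P'_def by auto
    have "inj_on (\<lambda>(ys,x). x#ys) (SIGMA ys:P'. {x\<in>Z. x#ys \<in> G})" by (auto simp: inj_on_def)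
    then have "card (G \<inter> prodL (Z#Zs)) = card (SIGMA ys:P'. {x\<in>Z. x#ys \<in> G})"
      unfolding e by (simp add: card_image)
    also have "\<dots> = (\<Sum>ys\<in>P'. cc ys)" unfolding cc_def using fP fZ by (simp add: card_SigmaI)
    finally show ?thesis by simp
  qed
  define g where "g = real (card (G \<inter> prodL (Z#Zs))) / real (card (prodL (Z#Zs)))"
  have cardP: "card (prodL (Z#Zs)) = z * M" unfolding z_def M_def P'_def by (subst prodL_card) (simp add: prodL_card)
  have g0: "g \<ge> 0" unfolding g_def by simp
  have PM0: "real M * ((\<Sum>ys\<in>P'. real (cc ys)) / real M) ^ s \<le> (\<Sum>ys\<in>P'. real (cc ys) ^ s)"
    using power_mean[of P' "\<lambda>ys. real (cc ys)" s] fP Mpos M_def card_gt_0_iff by auto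
  have "(\<Sum>ys\<in>P'. real (cc ys)) / real M = g * z"
    unfolding g_def cardP using dc2 Mpos zpos by (simp add: of_nat_sum[symmetric] field_simps)
  moreover have "(\<Sum>l\<in>L. real (card (Gl l \<inter> P'))) = (\<Sum>ys\<in>P'. real (cc ys) ^ s)"
    using arg_cong[OF dc1, of real] by simp
  ultimately have "real M * (g*z) ^ s \<le> (\<Sum>l\<in>L. real (card (Gl l \<inter> P')))"
    using PM0 by simp
  then have Sa: "(g*z)^s \<le> (\<Sum>l\<in>L. a l)"
    unfolding a_def using Mpos by (simp add: sum_divide_distrib[symmetric] field_simps)
  have PM1: "real (card L) * ((\<Sum>l\<in>L. a l) / real (card L)) ^ T \<le> (\<Sum>l\<in>L. a l ^ T)"
    using power_mean[of L a T] fL neL a0 by auto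
  have "g ^ s \<le> (\<Sum>l\<in>L. a l) / real (card L)"
    using Sa cardL zpos by (simp add: field_simps power_mult_distrib)
  then have "(g ^ s) ^ T \<le> ((\<Sum>l\<in>L. a l) / real (card L)) ^ T"
    using g0 by (simp add: power_mono)
  then have "real (card L) * (g ^ s) ^ T \<le> (\<Sum>l\<in>L. a l ^ T)"
    using PM1 cardL zpos by (smt (verit) mult_left_mono of_nat_0_le_iff)
  then have "real (card L) * (g ^ s) ^ T * W' \<le> (\<Sum>l\<in>L. a l ^ T) * W'"
    using W'pos by (simp add: mult_right_mono)
  moreover have "g ^ prod_list ss * W (Z#Zs) ss = real (card L) * (g ^ s) ^ T * W'"
    unfolding ss T_def W'_def W_def cardL z_def by (simp add: power_mult)
  ultimately show ?case using s1 unfolding g_def by linarith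
qed




lemma homs_mem:
  assumes "length ss = length Zs" "g \<in> homs G Zs ss"
  shows "length g = length Zs \<and> (\<forall>i<length Zs. g!i \<in> Lz (Zs!i) (ss!i)) \<and>
    (\<forall>\<sigma>. length \<sigma> = length ss \<and> (\<forall>i<length ss. \<sigma>!i < ss!i) \<longrightarrow> map (\<lambda>(l,j). l!j) (zip g \<sigma>) \<in> G)"
  using assms
proof (induction Zs arbitrary: G ss g)
  case Nil
  then show ?case by (auto split: if_splits)
next
  case (Cons Z Zs)
  obtain s ss' where ss: "ss = s#ss'" using Cons.prems by (cases ss) auto
  from Cons.prems(2) obtain l gs where g: "g = l#gs" and l: "l \<in> Lz Z s"
    and gs: "gs \<in> homs {ys. \<forall>x\<in>set l. x#ys \<in> G} Zs ss'" using ss by auto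
  note IH = Cons.IH[where ss=ss' and g=gs, OF _ gs]
  have len: "length ss' = length Zs" using Cons.prems ss by simp
  have A: "\<forall>i<length (Z#Zs). g!i \<in> Lz ((Z#Zs)!i) (ss!i)"
    using IH[OF len] l g ss by (auto simp: nth_Cons split: nat.splits)
  have B: "map (\<lambda>(l,j). l!j) (zip g \<sigma>) \<in> G" if h: "length \<sigma> = length ss" "\<forall>i<length ss. \<sigma>!i < ss!i" for \<sigma>
  proof -
    obtain j \<sigma>' where \<sigma>: "\<sigma> = j#\<sigma>'" using h ss by (cases \<sigma>) auto
    have "j < s" using h \<sigma> ss by force
    then have "l!j \<in> set l" using l unfolding Lz_def by auto
    moreover have "map (\<lambda>(l,j). l!j) (zip gs \<sigma>') \<in> {ys. \<forall>x\<in>set l. x#ys \<in> G}"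
      using IH[OF len] h \<sigma> ss by force
    ultimately show ?thesis using g \<sigma> by auto
  qed
  show ?case using A B IH[OF len] g by auto
qed

lemma G_card:
  "card {ys \<in> prodL (map Zf [0..<k]). set ys \<in> E} = card {x \<in> Pi\<^sub>E {..<k} Zf. x ` {..<k} \<in> E}"
proof -
  have inj: "inj_on (\<lambda>x. map x [0..<k]) (Pi\<^sub>E {..<k} Zf)"
  proof (rule inj_onI)
    fix x y assume "x \<in> Pi\<^sub>E {..<k} Zf" "y \<in> Pi\<^sub>E {..<k} Zf" "map x [0..<k] = map y [0..<k]"
    then show "x = y" by (intro PiE_ext) (auto simp: map_eq_conv)
  qed
  have "(\<lambda>x. map x [0..<k]) ` {x \<in> Pi\<^sub>E {..<k} Zf. x ` {..<k} \<in> E} = {ys \<in> prodL (map Zf [0..<k]). set ys \<in> E}"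
  proof (intro equalityI subsetI)
    fix ys assume "ys \<in> (\<lambda>x. map x [0..<k]) ` {x \<in> Pi\<^sub>E {..<k} Zf. x ` {..<k} \<in> E}"
    then obtain x where x: "x \<in> Pi\<^sub>E {..<k} Zf" "x ` {..<k} \<in> E" "ys = map x [0..<k]" by auto
    have "set ys = x ` {..<k}" using x by auto
    then show "ys \<in> {ys \<in> prodL (map Zf [0..<k]). set ys \<in> E}" using x by (auto simp: prodL_mem)
  next
    fix ys assume ys: "ys \<in> {ys \<in> prodL (map Zf [0..<k]). set ys \<in> E}"
    define x where "x = (\<lambda>i\<in>{..<k}. ys!i)"
    have l: "length ys = k" using ys by (simp add: prodL_mem)
    have "map x [0..<k] = ys" using l by (intro nth_equalityI) (auto simp: x_def)
    moreover have "x \<in> Pi\<^sub>E {..<k} Zf" using ys by (auto simp: x_def prodL_mem)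
    moreover have "x ` {..<k} = set ys" using l by (auto simp: x_def in_set_conv_nth)
    ultimately show "ys \<in> (\<lambda>x. map x [0..<k]) ` {x \<in> Pi\<^sub>E {..<k} Zf. x ` {..<k} \<in> E}"
      using ys by (metis (mono_tags, lifting) image_eqI mem_Collect_eq)
  qed
  then show ?thesis using inj by (metis (no_types, lifting) card_image inj_on_subset mem_Collect_eq subsetI)
qed




lemma main_count:
  fixes k :: nat and VF :: "'b set" and EF :: "'b set set" and V :: "'a set"
  assumes kg: "is_kgraph k VF EF" and re: "kpartite_realisation k VF EF c"
    and H: "npmu_graph k n p \<mu> V E"
    and Z: "\<forall>i<k. Zf i \<subseteq> V \<and> \<zeta> * real n \<le> real (card (Zf i))"
    and p: "0 < p" and z: "0 < \<zeta>" and n: "n \<ge> 1" and mu: "\<mu> \<le> p/2 * \<zeta>^k"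
  shows "(p/2)^(card VF ^ k) * (\<zeta> * real n)^(card VF) \<le>
    real (card {\<phi> \<in> Pi\<^sub>E VF (\<lambda>_. V). (\<forall>v\<in>VF. \<phi> v \<in> Zf (c v)) \<and> (\<forall>e\<in>EF. \<phi> ` e \<in> E)})"
proof -
  define f where "f = card VF"
  define cls where "cls = (\<lambda>i. {v\<in>VF. c v = i})"
  define s where "s = (\<lambda>i. card (cls i))"
  have finVF: "finite VF" using kg unfolding is_kgraph_def by auto
  have finV: "finite V" using H unfolding npmu_graph_def is_kgraph_def by auto
  have cardV: "card V = n" using H unfolding npmu_graph_def by auto
  have ck: "\<And>v. v \<in> VF \<Longrightarrow> c v < k" using re unfolding kpartite_realisation_def by auto
  have "\<forall>i. \<exists>h. bij_betw h (cls i) {..<s i}"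
  proof
    fix i have "finite (cls i)" using finVF unfolding cls_def by auto
    then show "\<exists>h. bij_betw h (cls i) {..<s i}" unfolding s_def
      using ex_bij_betw_finite_nat by (metis atLeast0LessThan)
  qed
  then obtain ix where ix: "\<And>i. bij_betw (ix i) (cls i) {..<s i}" by metis
  define idx where "idx = (\<lambda>v. ix (c v) v)"
  have idx_lt: "\<And>v. v \<in> VF \<Longrightarrow> idx v < s (c v)"
    unfolding idx_def using ix unfolding bij_betw_def cls_def by auto
  have idx_surj: "\<And>i j. j < s i \<Longrightarrow> \<exists>v\<in>VF. c v = i \<and> idx v = j"
  proof -
    fix i j assume "j < s i"
    then have "j \<in> ix i ` cls i" using ix unfolding bij_betw_def by auto
    then show "\<exists>v\<in>VF. c v = i \<and> idx v = j" unfolding idx_def cls_def by auto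
  qed
  define Zs where "Zs = map Zf [0..<k]"
  define ss where "ss = map s [0..<k]"
  define G where "G = {ys \<in> prodL Zs. set ys \<in> E}"
  define Phi where "Phi = (\<lambda>g::'a list list. \<lambda>v\<in>VF. g!(c v)!(idx v))"
  define Aset where "Aset = {\<phi> \<in> Pi\<^sub>E VF (\<lambda>_. V). (\<forall>v\<in>VF. \<phi> v \<in> Zf (c v)) \<and> (\<forall>e\<in>EF. \<phi> ` e \<in> E)}"
  have lenss: "length ss = length Zs" unfolding ss_def Zs_def by simp
  have mem: "length g = k \<and> (\<forall>i<k. g!i \<in> Lz (Zf i) (s i)) \<and>
    (\<forall>\<sigma>. length \<sigma> = k \<and> (\<forall>i<k. \<sigma>!i < s i) \<longrightarrow> map (\<lambda>(l,j). l!j) (zip g \<sigma>) \<in> G)"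
    if "g \<in> homs G Zs ss" for g
    using homs_mem[OF lenss that] unfolding Zs_def ss_def by auto
  have img: "Phi g \<in> Aset" if g: "g \<in> homs G Zs ss" for g
  proof -
    note m = mem[OF g]
    have inZ: "Phi g v \<in> Zf (c v)" if v: "v \<in> VF" for v
    proof -
      have "g!(c v) \<in> Lz (Zf (c v)) (s (c v))" using m ck[OF v] by auto
      then have "g!(c v)!(idx v) \<in> set (g!(c v))" using idx_lt[OF v] unfolding Lz_def by auto
      then show ?thesis using v \<open>g!(c v) \<in> Lz (Zf (c v)) (s (c v))\<close> unfolding Phi_def Lz_def by auto
    qed
    have edge: "Phi g ` e \<in> E" if e: "e \<in> EF" for e
    proof -
      have e1: "\<And>i. i < k \<Longrightarrow> card {v\<in>e. c v = i} = 1" using re e unfolding kpartite_realisation_def by auto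
      have "\<forall>i<k. \<exists>w. w \<in> e \<and> c w = i" 
      proof (intro allI impI)
        fix i assume "i < k" then have "card {v\<in>e. c v = i} = 1" by (rule e1)
        then obtain w where "{v\<in>e. c v = i} = {w}" by (auto simp: card_Suc_eq)
        then show "\<exists>w. w \<in> e \<and> c w = i" by auto
      qed
      then obtain w where w: "\<And>i. i < k \<Longrightarrow> w i \<in> e \<and> c (w i) = i" by metis
      have eVF: "e \<subseteq> VF" using kg e unfolding is_kgraph_def by auto
      have uniq: "v = w (c v)" if "v \<in> e" for v
      proof -
        have cv: "c v < k" using ck eVF that by auto
        have "card {u\<in>e. c u = c v} = 1" using e1[OF cv] .
        then obtain u where "{u'\<in>e. c u' = c v} = {u}" by (auto simp: card_Suc_eq)
        moreover have "v \<in> {u'\<in>e. c u' = c v}" "w (c v) \<in> {u'\<in>e. c u' = c v}" using that w[OF cv] by auto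
        ultimately have "v = u" "w (c v) = u" by blast+
        then show ?thesis by simp
      qed
      have eq: "e = w ` {..<k}" using uniq w ck eVF by (auto) (metis image_eqI lessThan_iff subsetD)
      define \<sigma> where "\<sigma> = map (\<lambda>i. idx (w i)) [0..<k]"
      have "length \<sigma> = k \<and> (\<forall>i<k. \<sigma>!i < s i)"
        unfolding \<sigma>_def using idx_lt w eVF by (metis (no_types, lifting) diff_zero length_map length_upt nth_map_upt plus_nat.add_0 subsetD)
      then have inG: "map (\<lambda>(l,j). l!j) (zip g \<sigma>) \<in> G" using m by blast
      have "map (\<lambda>(l,j). l!j) (zip g \<sigma>) = map (\<lambda>i. Phi g (w i)) [0..<k]"
        using m w eVF by (intro nth_equalityI) (auto simp: \<sigma>_def Phi_def)
      then have "set (map (\<lambda>i. Phi g (w i)) [0..<k]) \<in> E" using inG unfolding G_def by auto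
      moreover have "set (map (\<lambda>i. Phi g (w i)) [0..<k]) = Phi g ` e" using eq by auto
      ultimately show ?thesis by simp
    qed
    have "Phi g \<in> Pi\<^sub>E VF (\<lambda>_. V)" using inZ Z ck unfolding Phi_def by auto
    then show ?thesis unfolding Aset_def using inZ edge by auto
  qed
  have inj: "inj_on Phi (homs G Zs ss)"
  proof (rule inj_onI)
    fix g h assume g: "g \<in> homs G Zs ss" and h: "h \<in> homs G Zs ss" and eq: "Phi g = Phi h"
    note mg = mem[OF g] and mh = mem[OF h]
    show "g = h"
    proof (rule nth_equalityI)
      show "length g = length h" using mg mh by simp
      fix i assume "i < length g"
      then have i: "i < k" using mg by simp
      show "g!i = h!i"
      proof (rule nth_equalityI)
        show "length (g!i) = length (h!i)" using mg mh i unfolding Lz_def by simp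
        fix j assume "j < length (g!i)"
        then have "j < s i" using mg i unfolding Lz_def by simp
        then obtain v where v: "v \<in> VF" "c v = i" "idx v = j" using idx_surj by blast
        have "Phi g v = Phi h v" using eq by simp
        then show "g!i!j = h!i!j" using v unfolding Phi_def by simp
      qed
    qed
  qed
  have finA: "finite Aset" unfolding Aset_def using finVF finV by (intro finite_subset[OF _ finite_PiE[of VF "\<lambda>_. V"]]) auto
  have cardle: "card (homs G Zs ss) \<le> card Aset"
    using card_inj_on_le[OF inj _ finA] img by auto
  have finZ: "\<forall>Z\<in>set Zs. finite Z \<and> Z \<noteq> {}"
  proof
    fix Z assume "Z \<in> set Zs"
    then obtain i where i: "i < k" "Z = Zf i" unfolding Zs_def by auto
    have "Z \<subseteq> V" using i Z by auto
    then have "finite Z" using finV finite_subset by blast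
    moreover have "real (card Z) > 0" using i Z z n
      by (smt (verit, best) of_nat_0_less_iff of_nat_1 of_nat_mono zero_less_mult_iff)
    ultimately show "finite Z \<and> Z \<noteq> {}" by auto
  qed
  have lb: "(real (card (G \<inter> prodL Zs)) / real (card (prodL Zs)))^(prod_list ss) * W Zs ss \<le> real (card (homs G Zs ss))"
    using homs_lb[OF lenss finZ] .
  have GP: "G \<inter> prodL Zs = G" unfolding G_def by auto
  have plist: "\<And>h::nat\<Rightarrow>nat. prod_list (map h [0..<k]) = (\<Prod>i<k. h i)"
    by (metis atLeast0LessThan distinct_upt prod.distinct_set_conv_list set_upt)
  have plistr: "\<And>h::nat\<Rightarrow>real. prod_list (map h [0..<k]) = (\<Prod>i<k. h i)"
    by (metis atLeast0LessThan distinct_upt prod.distinct_set_conv_list set_upt)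
  define Pr where "Pr = (\<Prod>i<k. real (card (Zf i)))"
  have cP: "real (card (prodL Zs)) = Pr" unfolding Pr_def Zs_def prodL_card
    by (simp add: plist[of "\<lambda>i. card (Zf i)"] comp_def)
  have Prge: "(\<zeta> * real n)^k \<le> Pr"
  proof -
    have "(\<Prod>i<k. \<zeta> * real n) \<le> Pr" unfolding Pr_def
      using Z z n by (intro prod_mono) auto
    then show ?thesis by simp
  qed
  have zn: "\<zeta> * real n > 0" using z n by simp
  have Prpos: "Pr > 0" using Prge zero_less_power[OF zn, of k] by linarith
  have cG: "real (card G) \<ge> p * Pr - \<mu> * real n ^ k"
  proof -
    have "real (card {x \<in> Pi\<^sub>E {..<k} Zf. x ` {..<k} \<in> E}) \<ge> p * Pr - \<mu> * real n ^ k"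
      using H Z unfolding npmu_graph_def Pr_def by auto
    moreover have "card G = card {x \<in> Pi\<^sub>E {..<k} Zf. x ` {..<k} \<in> E}"
      unfolding G_def Zs_def by (rule G_card)
    ultimately show ?thesis by simp
  qed
  have "\<mu> * real n ^ k \<le> p/2 * \<zeta>^k * real n ^ k" using mult_right_mono[OF mu, of "real n ^ k"] by simp
  also have "\<dots> = p/2 * (\<zeta> * real n)^k" by (simp add: power_mult_distrib)
  also have "\<dots> \<le> p/2 * Pr" using Prge p by simp
  finally have cG2: "real (card G) \<ge> p/2 * Pr" using cG by simp
  define d where "d = real (card G) / Pr"
  have d1: "d \<ge> p/2" unfolding d_def using cG2 Prpos by (simp add: field_simps)
  have finP: "finite (prodL Zs)" using finZ prodL_finite by auto
  have "card G \<le> card (prodL Zs)" unfolding G_def using finP by (intro card_mono) auto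
  then have d2: "d \<le> 1" unfolding d_def using cP Prpos by simp
  have sumS: "(\<Sum>i<k. s i) = f"
  proof -
    have "VF = (\<Union>i\<in>{..<k}. cls i)" unfolding cls_def using ck by auto
    moreover have "card (\<Union>i\<in>{..<k}. cls i) = (\<Sum>i<k. card (cls i))"
      using finVF unfolding cls_def by (intro card_UN_disjoint) auto
    ultimately show ?thesis unfolding f_def s_def by simp
  qed
  have sle: "\<And>i. s i \<le> f" unfolding s_def f_def cls_def using finVF by (intro card_mono) auto
  have pl: "prod_list ss \<le> f ^ k"
  proof -
    have "prod_list ss = (\<Prod>i<k. s i)" unfolding ss_def by (rule plist)
    also have "\<dots> \<le> (\<Prod>i<k. f)" using sle by (intro prod_mono) auto
    finally show ?thesis by simp
  qed
  have dpow: "(p/2)^(f^k) \<le> d ^ prod_list ss"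
  proof -
    have "(p/2)^(f^k) \<le> d^(f^k)" using d1 p by (intro power_mono) auto
    also have "\<dots> \<le> d ^ prod_list ss" using pl d1 d2 p by (intro power_decreasing) auto
    finally show ?thesis .
  qed
  have Weq: "W Zs ss = (\<Prod>i<k. real (card (Zf i)) ^ s i)"
    unfolding W_def Zs_def ss_def zip_map_map zip_same_conv_map map_map
    by (simp add: plistr[of "\<lambda>i. real (card (Zf i)) ^ s i"] comp_def)
  have Wge: "(\<zeta> * real n)^f \<le> W Zs ss"
  proof -
    have "(\<Prod>i<k. (\<zeta> * real n) ^ s i) \<le> (\<Prod>i<k. real (card (Zf i)) ^ s i)"
      using Z z n by (intro prod_mono) (auto intro!: power_mono)
    moreover have "(\<Prod>i<k. (\<zeta> * real n) ^ s i) = (\<zeta> * real n)^f"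
      unfolding sumS[symmetric] by (rule power_sum[symmetric])
    ultimately show ?thesis using Weq by simp
  qed
  have "(p/2)^(f^k) * (\<zeta> * real n)^f \<le> d ^ prod_list ss * W Zs ss"
    using dpow Wge p z d1 by (intro mult_mono) auto
  also have "\<dots> \<le> real (card (homs G Zs ss))" using lb GP cP d_def by simp
  also have "\<dots> \<le> real (card Aset)" using cardle by simp
  finally show ?thesis unfolding Aset_def f_def .
qed



lemma fibre_bound:
  assumes "finite A" "\<And>y. y \<in> h ` A \<Longrightarrow> card {x\<in>A. h x = y} \<le> K"
  shows "card A \<le> card (h ` A) * K"
proof -
  have e: "A = (\<Union>y\<in>h`A. {x\<in>A. h x = y})" by auto
  have "card A = card (\<Union>y\<in>h`A. {x\<in>A. h x = y})" using arg_cong[OF e, of card] .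
  also have "\<dots> \<le> (\<Sum>y\<in>h`A. card {x\<in>A. h x = y})"
    by (rule card_UN_le[OF finite_imageI[OF assms(1)]])
  also have "\<dots> \<le> (\<Sum>y\<in>h`A. K)" using assms(2) by (intro sum_mono) auto
  finally show ?thesis by simp
qed

lemma noninj_bound:
  assumes "finite VF" "finite V"
  shows "card {\<phi> \<in> Pi\<^sub>E VF (\<lambda>_. V). \<not> inj_on \<phi> VF} \<le> card VF ^ 2 * card V ^ (card VF - 1)"
proof -
  define I where "I = {(u,v). u \<in> VF \<and> v \<in> VF \<and> u \<noteq> v}"
  define B where "B = (\<lambda>(u,v). {\<phi> \<in> Pi\<^sub>E VF (\<lambda>_. V). \<phi> u = \<phi> v})"
  have sub: "{\<phi> \<in> Pi\<^sub>E VF (\<lambda>_. V). \<not> inj_on \<phi> VF} \<subseteq> (\<Union>uv\<in>I. B uv)"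
    unfolding inj_on_def I_def B_def by auto
  have fI: "finite I"
    by (rule finite_subset[of I "VF \<times> VF"]) (auto simp: I_def assms(1))
  have cI: "card I \<le> card VF ^ 2"
  proof -
    have "card I \<le> card (VF \<times> VF)" unfolding I_def using assms(1) by (intro card_mono) auto
    then show ?thesis by (simp add: card_cartesian_product power2_eq_square)
  qed
  have cB: "card (B uv) \<le> card V ^ (card VF - 1)" if "uv \<in> I" for uv
  proof -
    obtain u v where uv0: "uv = (u,v)" by (cases uv)
    then have uv: "uv = (u,v)" "u \<in> VF" "v \<in> VF" "u \<noteq> v" using that unfolding I_def by auto
    have inj: "inj_on (\<lambda>\<phi>. restrict \<phi> (VF - {u})) (B uv)"
    proof (rule inj_onI)
      fix \<phi> \<psi> assume a: "\<phi> \<in> B uv" "\<psi> \<in> B uv" "restrict \<phi> (VF - {u}) = restrict \<psi> (VF - {u})"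
      show "\<phi> = \<psi>"
      proof (rule PiE_ext)
        show "\<phi> \<in> Pi\<^sub>E VF (\<lambda>_. V)" "\<psi> \<in> Pi\<^sub>E VF (\<lambda>_. V)" using a uv unfolding B_def by auto
        fix x assume x: "x \<in> VF"
        have e: "\<And>y. y \<in> VF - {u} \<Longrightarrow> \<phi> y = \<psi> y" using a(3) by (metis restrict_apply')
        show "\<phi> x = \<psi> x"
        proof (cases "x = u")
          case True
          have "\<phi> u = \<phi> v" "\<psi> u = \<psi> v" using a uv unfolding B_def by auto
          then show ?thesis using e[of v] uv True by auto
        qed (use e x in auto)
      qed
    qed
    have im: "(\<lambda>\<phi>. restrict \<phi> (VF - {u})) ` B uv \<subseteq> Pi\<^sub>E (VF - {u}) (\<lambda>_. V)"
    proof
      fix \<psi> assume "\<psi> \<in> (\<lambda>\<phi>. restrict \<phi> (VF - {u})) ` B uv"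
      then obtain \<phi> where "\<phi> \<in> B uv" "\<psi> = restrict \<phi> (VF - {u})" by blast
      then have "\<phi> \<in> Pi\<^sub>E VF (\<lambda>_. V)" "\<psi> = restrict \<phi> (VF - {u})" unfolding B_def uv(1) by auto
      then show "\<psi> \<in> Pi\<^sub>E (VF - {u}) (\<lambda>_. V)" by (simp only: restrict_PiE_iff) (auto simp: PiE_iff)
    qed
    have "card (B uv) \<le> card (Pi\<^sub>E (VF - {u}) (\<lambda>_. V))"
      using card_inj_on_le[OF inj im] assms by (auto intro: finite_PiE)
    also have "\<dots> = card V ^ (card VF - 1)" using assms uv by (simp add: card_PiE)
    finally show ?thesis .
  qed
  have fB: "\<And>uv. finite (B uv)"
    unfolding B_def using assms by (auto intro: finite_subset[OF _ finite_PiE[of VF "\<lambda>_. V"]])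
  have "card {\<phi> \<in> Pi\<^sub>E VF (\<lambda>_. V). \<not> inj_on \<phi> VF} \<le> card (\<Union>uv\<in>I. B uv)"
    using sub fI fB by (intro card_mono) auto
  also have "\<dots> \<le> (\<Sum>uv\<in>I. card (B uv))" using card_UN_le[OF fI] .
  also have "\<dots> \<le> (\<Sum>uv\<in>I. card V ^ (card VF - 1))" using cB by (intro sum_mono) auto
  also have "\<dots> = card I * card V ^ (card VF - 1)" by simp
  also have "\<dots> \<le> card VF ^ 2 * card V ^ (card VF - 1)" using cI by simp
  finally show ?thesis .
qed




lemma copies_count:
  fixes VF :: "'b set" and V :: "'a set"
  assumes kg: "is_kgraph k VF EF" and re: "kpartite_realisation k VF EF c"
    and H: "npmu_graph k n p \<mu> V E"
    and XY: "X \<union> Y = V" "X \<inter> Y = {}" "\<zeta> * real n \<le> real (card X)" "\<zeta> * real n \<le> real (card Y)"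
    and p: "0 < p" and z: "0 < \<zeta>" and n: "n \<ge> 1" and mu: "\<mu> \<le> p/2 * \<zeta>^k"
    and nl: "real (card VF)^2 \<le> (p/2)^(card VF^k) * \<zeta>^(card VF) / 2 * real n"
  shows "(p/2)^(card VF^k) * \<zeta>^(card VF) / (2 * real (card VF)^(card VF)) * real n ^ card VF
     \<le> real (card {F' \<in> copies VF EF V E. card (fst F' \<inter> X) = card {v\<in>VF. c v \<in> J}
            \<and> card (fst F' \<inter> Y) = card VF - card {v\<in>VF. c v \<in> J}})"
proof -
  define f where "f = card VF"
  define a where "a = card {v\<in>VF. c v \<in> J}"
  define D where "D = (p/2)^(f^k) * \<zeta>^f"
  define Zf where "Zf = (\<lambda>i. if i \<in> J then X else Y)"
  define Aset where "Aset = {\<phi> \<in> Pi\<^sub>E VF (\<lambda>_. V). (\<forall>v\<in>VF. \<phi> v \<in> Zf (c v)) \<and> (\<forall>e\<in>EF. \<phi> ` e \<in> E)}"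
  define Ainj where "Ainj = {\<phi>\<in>Aset. inj_on \<phi> VF}"
  define Cset where "Cset = {F' \<in> copies VF EF V E. card (fst F' \<inter> X) = a \<and> card (fst F' \<inter> Y) = f - a}"
  have finVF: "finite VF" using kg unfolding is_kgraph_def by auto
  have finV: "finite V" using H unfolding npmu_graph_def is_kgraph_def by auto
  have cardV: "card V = n" using H unfolding npmu_graph_def by auto
  have EV: "\<And>e. e \<in> E \<Longrightarrow> e \<subseteq> V" using H unfolding npmu_graph_def is_kgraph_def by auto
  have D0: "D > 0" unfolding D_def using p z by simp
  have Z: "\<forall>i<k. Zf i \<subseteq> V \<and> \<zeta> * real n \<le> real (card (Zf i))" unfolding Zf_def using XY by auto
  have mc: "D * real n ^ f \<le> real (card Aset)"
    using main_count[OF kg re H Z p z n mu] unfolding Aset_def D_def f_def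
    by (simp add: power_mult_distrib mult.assoc)
  have finA: "finite Aset" unfolding Aset_def using finVF finV
    by (intro finite_subset[OF _ finite_PiE[of VF "\<lambda>_. V"]]) auto
  have "Aset \<subseteq> Ainj \<union> {\<phi> \<in> Pi\<^sub>E VF (\<lambda>_. V). \<not> inj_on \<phi> VF}" unfolding Ainj_def Aset_def by auto
  then have "card Aset \<le> card Ainj + card {\<phi> \<in> Pi\<^sub>E VF (\<lambda>_. V). \<not> inj_on \<phi> VF}"
  proof -
    have fN: "finite {\<phi> \<in> Pi\<^sub>E VF (\<lambda>_. V). \<not> inj_on \<phi> VF}" using finVF finV
      by (intro finite_subset[OF _ finite_PiE[of VF "\<lambda>_. V"]]) auto
    have fAi: "finite Ainj" using finA unfolding Ainj_def by auto
    have "card Aset \<le> card (Ainj \<union> {\<phi> \<in> Pi\<^sub>E VF (\<lambda>_. V). \<not> inj_on \<phi> VF})"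
      using fN fAi \<open>Aset \<subseteq> _\<close> by (intro card_mono) auto
    also have "\<dots> \<le> card Ainj + card {\<phi> \<in> Pi\<^sub>E VF (\<lambda>_. V). \<not> inj_on \<phi> VF}" by (rule card_Un_le)
    finally show ?thesis .
  qed
  then have c1: "real (card Aset) \<le> real (card Ainj) + real f ^ 2 * real n ^ (f - 1)"
  proof -
    have "card {\<phi> \<in> Pi\<^sub>E VF (\<lambda>_. V). \<not> inj_on \<phi> VF} \<le> f ^ 2 * n ^ (f - 1)"
      using noninj_bound[OF finVF finV] cardV unfolding f_def by simp
    then have "real (card {\<phi> \<in> Pi\<^sub>E VF (\<lambda>_. V). \<not> inj_on \<phi> VF}) \<le> real f ^ 2 * real n ^ (f - 1)"
      by (metis of_nat_le_iff of_nat_mult of_nat_power)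
    then show ?thesis using \<open>card Aset \<le> _\<close> by linarith
  qed
  have c2: "real f ^ 2 * real n ^ (f - 1) \<le> D/2 * real n ^ f"
  proof (cases "f = 0")
    case True then show ?thesis using D0 by simp
  next
    case False
    then have "real n ^ f = real n * real n ^ (f - 1)" by (metis power_eq_if)
    moreover have "real f ^ 2 * real n ^ (f - 1) \<le> (D/2 * real n) * real n ^ (f - 1)"
      using nl unfolding D_def f_def by (intro mult_right_mono) auto
    ultimately show ?thesis by simp
  qed
  have c3: "D/2 * real n ^ f \<le> real (card Ainj)" using mc c1 c2 by linarith
  define cp where "cp = (\<lambda>\<phi>::'b\<Rightarrow>'a. (\<phi> ` VF, (\<lambda>e. \<phi> ` e) ` EF))"
  have cpC: "cp \<phi> \<in> Cset" if "\<phi> \<in> Ainj" for \<phi>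
  proof -
    have \<phi>: "\<phi> \<in> Pi\<^sub>E VF (\<lambda>_. V)" "\<And>v. v \<in> VF \<Longrightarrow> \<phi> v \<in> Zf (c v)" "\<And>e. e \<in> EF \<Longrightarrow> \<phi> ` e \<in> E" "inj_on \<phi> VF"
      using that unfolding Ainj_def Aset_def by auto
    have cop: "cp \<phi> \<in> copies VF EF V E"
      unfolding copies_def cp_def using \<phi> by (auto simp: bij_betw_def)
    have memZ: "\<And>v. v\<in>VF \<Longrightarrow> (c v \<in> J \<longrightarrow> \<phi> v \<in> X) \<and> (c v \<notin> J \<longrightarrow> \<phi> v \<in> Y)"
      using \<phi>(2) unfolding Zf_def by (metis (full_types))
    have disj: "\<And>y. y \<in> X \<Longrightarrow> y \<notin> Y" using XY(2) by blast
    have x: "\<phi> ` VF \<inter> X = \<phi> ` {v\<in>VF. c v \<in> J}"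
      using memZ disj by blast
    have y: "\<phi> ` VF \<inter> Y = \<phi> ` (VF - {v\<in>VF. c v \<in> J})"
      using memZ disj by blast
    have "card (\<phi> ` VF \<inter> X) = a" unfolding x a_def
      using \<phi>(4) by (intro card_image) (auto intro: inj_on_subset)
    moreover have "card (\<phi> ` VF \<inter> Y) = f - a" unfolding y a_def f_def
      using \<phi>(4) finVF by (subst card_image) (auto intro: inj_on_subset simp: card_Diff_subset)
    ultimately show ?thesis using cop unfolding Cset_def cp_def by simp
  qed
  have finC: "finite Cset"
  proof -
    have "Cset \<subseteq> Pow V \<times> Pow E" unfolding Cset_def copies_def by auto
    moreover have "finite E" using EV finV
      by (meson finite_Pow_iff finite_subset PowI subsetI)
    ultimately show ?thesis using finV by (meson finite_Pow_iff finite_SigmaI finite_subset)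
  qed
  have fib: "card {\<phi>\<in>Ainj. cp \<phi> = C} \<le> f ^ f" if hC: "C \<in> cp ` Ainj" for C
  proof -
    obtain \<phi>0 where \<phi>0: "\<phi>0 \<in> Ainj" "C = cp \<phi>0" using hC by blast
    have cf: "card (fst C) = f" using \<phi>0 unfolding cp_def Ainj_def f_def by (simp add: card_image)
    have ff: "finite (fst C)" using \<phi>0 finVF unfolding cp_def by simp
    have "{\<phi>\<in>Ainj. cp \<phi> = C} \<subseteq> Pi\<^sub>E VF (\<lambda>_. fst C)"
      unfolding Ainj_def Aset_def cp_def by auto
    then have "card {\<phi>\<in>Ainj. cp \<phi> = C} \<le> card (Pi\<^sub>E VF (\<lambda>_. fst C))"
      using finVF ff by (intro card_mono) (auto intro: finite_PiE)
    also have "\<dots> = f ^ f" using finVF cf by (simp add: card_PiE f_def)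
    finally show ?thesis .
  qed
  have finAi: "finite Ainj" using finA unfolding Ainj_def by auto
  have "card Ainj \<le> card (cp ` Ainj) * f ^ f" by (rule fibre_bound[OF finAi fib])
  also have "\<dots> \<le> card Cset * f ^ f" using cpC finC by (intro mult_right_mono card_mono) auto
  finally have "real (card Ainj) \<le> real (card Cset) * real f ^ f"
    by (metis of_nat_le_iff of_nat_mult of_nat_power)
  then have "D/2 * real n ^ f \<le> real (card Cset) * real f ^ f" using c3 by linarith
  moreover have fpos: "real f ^ f > 0" by (cases "f = 0") auto
  ultimately have "D/2 * real n ^ f / real f ^ f \<le> real (card Cset)"
    by (simp add: pos_divide_le_eq)
  moreover have "D / (2 * real f ^ f) * real n ^ f = D/2 * real n ^ f / real f ^ f" by simp
  ultimately have "D / (2 * real f ^ f) * real n ^ f \<le> real (card Cset)" by simp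
  then show ?thesis unfolding Cset_def D_def f_def a_def .
qed




lemma lat_mem: "v \<in> S \<Longrightarrow> v \<in> int_lattice S"
  unfolding int_lattice_def
  by (rule CollectI, rule exI[of _ "{v}"], rule exI[of _ "\<lambda>_. 1"]) auto

lemma lat_add:
  assumes "(a,b) \<in> int_lattice S" "(a',b') \<in> int_lattice S"
  shows "(a+a', b+b') \<in> int_lattice S"
proof -
  obtain T c where T: "finite T" "T \<subseteq> S" "a = (\<Sum>v\<in>T. c v * fst v)" "b = (\<Sum>v\<in>T. c v * snd v)"
    using assms(1) unfolding int_lattice_def by auto
  obtain T' c' where T': "finite T'" "T' \<subseteq> S" "a' = (\<Sum>v\<in>T'. c' v * fst v)" "b' = (\<Sum>v\<in>T'. c' v * snd v)"
    using assms(2) unfolding int_lattice_def by auto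
  define c1 where "c1 = (\<lambda>v. if v \<in> T then c v else 0)"
  define c2 where "c2 = (\<lambda>v. if v \<in> T' then c' v else 0)"
  have fU: "finite (T \<union> T')" using T T' by simp
  have s1: "\<And>g::int\<times>int\<Rightarrow>int. (\<Sum>v\<in>T. c v * g v) = (\<Sum>v\<in>T \<union> T'. c1 v * g v)"
    unfolding c1_def using fU by (intro sum.mono_neutral_cong_left) auto
  have s2: "\<And>g::int\<times>int\<Rightarrow>int. (\<Sum>v\<in>T'. c' v * g v) = (\<Sum>v\<in>T \<union> T'. c2 v * g v)"
    unfolding c2_def using fU by (intro sum.mono_neutral_cong_left) auto
  have "a + a' = (\<Sum>v\<in>T \<union> T'. (c1 v + c2 v) * fst v)"
    using T(3) T'(3) s1[of fst] s2[of fst] by (simp add: distrib_right sum.distrib)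
  moreover have "b + b' = (\<Sum>v\<in>T \<union> T'. (c1 v + c2 v) * snd v)"
    using T(4) T'(4) s1[of snd] s2[of snd] by (simp add: distrib_right sum.distrib)
  ultimately show ?thesis unfolding int_lattice_def using fU T(2) T'(2)
    by (intro CollectI exI[of _ "T \<union> T'"] exI[of _ "\<lambda>v. c1 v + c2 v"]) auto
qed

lemma lat_smul:
  assumes "(a,b) \<in> int_lattice S"
  shows "(m*a, m*b) \<in> int_lattice S"
proof -
  obtain T c where T: "finite T" "T \<subseteq> S" "a = (\<Sum>v\<in>T. c v * fst v)" "b = (\<Sum>v\<in>T. c v * snd v)"
    using assms(1) unfolding int_lattice_def by auto
  have "m*a = (\<Sum>v\<in>T. (m * c v) * fst v)" "m*b = (\<Sum>v\<in>T. (m * c v) * snd v)"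
    using T by (simp_all add: sum_distrib_left mult.assoc)
  then show ?thesis unfolding int_lattice_def using T
    by (intro CollectI exI[of _ T] exI[of _ "\<lambda>v. m * c v"]) auto
qed

lemma gcd_lattice:
  assumes g: "Gcd (S::nat set) = 1" and h: "\<And>s. s \<in> S \<Longrightarrow> (int s, - int s) \<in> int_lattice R"
  shows "(1, -1) \<in> int_lattice R"
proof -
  define M where "M = {m::int. (m, -m) \<in> int_lattice R}"
  have Mmul: "\<And>m q. m \<in> M \<Longrightarrow> q * m \<in> M" unfolding M_def using lat_smul by fastforce
  have Madd: "\<And>m m'. m \<in> M \<Longrightarrow> m' \<in> M \<Longrightarrow> m + m' \<in> M" unfolding M_def
    using lat_add by fastforce
  have Ms: "\<And>s. s \<in> S \<Longrightarrow> int s \<in> M" unfolding M_def using h by auto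
  obtain s0 where s0: "s0 \<in> S" "s0 > 0"
  proof (rule ccontr)
    assume "\<not> thesis"
    then have "S \<subseteq> {0}" using that by auto
    then have "Gcd S = 0" by (simp add: Gcd_0_iff)
    then show False using g by simp
  qed
  define d where "d = (LEAST d::nat. d > 0 \<and> int d \<in> M)"
  have ex: "s0 > 0 \<and> int s0 \<in> M" using s0 Ms by auto
  have d: "d > 0 \<and> int d \<in> M" unfolding d_def by (rule LeastI[of _ s0]) (use ex in auto)
  have dmin: "\<And>e. e > 0 \<Longrightarrow> int e \<in> M \<Longrightarrow> d \<le> e" unfolding d_def by (rule Least_le) auto
  have ddvd: "d dvd s" if "s \<in> S" for s
  proof -
    define r where "r = int s mod int d"
    have "r = int s + (- (int s div int d)) * int d" unfolding r_def by (simp add: mod_div_decomp algebra_simps minus_div_mult_eq_mod[symmetric])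
    moreover have "(- (int s div int d)) * int d \<in> M" using Mmul d by blast
    ultimately have rM: "r \<in> M" using Madd Ms[OF that] by metis
    have r0: "0 \<le> r" "r < int d" unfolding r_def using d by auto
    have "r = 0"
    proof (rule ccontr)
      assume "r \<noteq> 0"
      then have "nat r > 0" "int (nat r) \<in> M" using r0 rM by auto
      then have "d \<le> nat r" using dmin by auto
      then show False using r0 by linarith
    qed
    then have "int d dvd int s" unfolding r_def by (simp add: dvd_eq_mod_eq_0)
    then show ?thesis by simp
  qed
  have "d dvd Gcd S" by (rule Gcd_greatest) (use ddvd in auto)
  then have "d = 1" using g by simp
  then show ?thesis using d unfolding M_def by simp
qed




theorem mainTheorem16:
  fixes k :: nat and VF :: "'b set" and EF :: "'b set set"
  assumes "k \<ge> 2"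
    and "is_kgraph k VF EF"
    and "is_kpartite k VF EF"
    and "Gcd (class_sizes k VF EF) = 1"
  shows "\<forall>p \<zeta>. 0 < p \<and> p < 1 \<and> 0 < \<zeta> \<and> \<zeta> < 1 \<longrightarrow>
    (\<exists>lam0>0. \<forall>lam. 0 < lam \<and> lam \<le> lam0 \<longrightarrow>
      (\<exists>\<mu>0>0. \<forall>\<mu>. 0 < \<mu> \<and> \<mu> \<le> \<mu>0 \<longrightarrow>
        (\<exists>n0. \<forall>n \<ge> n0. \<forall>(V :: nat set) E X Y.
            npmu_graph k n p \<mu> V E \<and> X \<union> Y = V \<and> X \<inter> Y = {} \<and>
            real (card X) \<ge> \<zeta> * real n \<and> real (card Y) \<ge> \<zeta> * real n \<longrightarrow>
            (1, -1) \<in> int_lattice (robust_vectors lam VF EF V E X Y))))"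
proof (intro allI impI)
  fix p \<zeta> :: real assume pz: "0 < p \<and> p < 1 \<and> 0 < \<zeta> \<and> \<zeta> < 1"
  have kg: "is_kgraph k VF EF" using assms(2) .
  have finVF: "finite VF" using kg unfolding is_kgraph_def by auto
  define f where "f = card VF"
  define D where "D = (p/2)^(f^k) * \<zeta>^f"
  define lam0 where "lam0 = D / (2 * real f ^ f)"
  have D0: "D > 0" unfolding D_def using pz by simp
  have fpos: "real f ^ f > 0" by (cases "f = 0") auto
  have l0: "lam0 > 0" unfolding lam0_def using D0 fpos by simp
  show "\<exists>lam0>0. \<forall>lam. 0 < lam \<and> lam \<le> lam0 \<longrightarrow>
      (\<exists>\<mu>0>0. \<forall>\<mu>. 0 < \<mu> \<and> \<mu> \<le> \<mu>0 \<longrightarrow>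
        (\<exists>n0. \<forall>n \<ge> n0. \<forall>(V :: nat set) E X Y.
            npmu_graph k n p \<mu> V E \<and> X \<union> Y = V \<and> X \<inter> Y = {} \<and>
            real (card X) \<ge> \<zeta> * real n \<and> real (card Y) \<ge> \<zeta> * real n \<longrightarrow>
            (1, -1) \<in> int_lattice (robust_vectors lam VF EF V E X Y)))"
  proof (rule exI[of _ lam0], intro conjI allI impI)
    show "lam0 > 0" by (rule l0)
    fix lam assume lam: "0 < lam \<and> lam \<le> lam0"
    show "\<exists>\<mu>0>0. \<forall>\<mu>. 0 < \<mu> \<and> \<mu> \<le> \<mu>0 \<longrightarrow>
        (\<exists>n0. \<forall>n \<ge> n0. \<forall>(V :: nat set) E X Y.
            npmu_graph k n p \<mu> V E \<and> X \<union> Y = V \<and> X \<inter> Y = {} \<and>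
            real (card X) \<ge> \<zeta> * real n \<and> real (card Y) \<ge> \<zeta> * real n \<longrightarrow>
            (1, -1) \<in> int_lattice (robust_vectors lam VF EF V E X Y))"
    proof (rule exI[of _ "p/2 * \<zeta>^k"], intro conjI allI impI)
      show "p/2 * \<zeta>^k > 0" using pz by simp
      fix \<mu> assume mu: "0 < \<mu> \<and> \<mu> \<le> p/2 * \<zeta>^k"
      show "\<exists>n0. \<forall>n \<ge> n0. \<forall>(V :: nat set) E X Y.
            npmu_graph k n p \<mu> V E \<and> X \<union> Y = V \<and> X \<inter> Y = {} \<and>
            real (card X) \<ge> \<zeta> * real n \<and> real (card Y) \<ge> \<zeta> * real n \<longrightarrow>
            (1, -1) \<in> int_lattice (robust_vectors lam VF EF V E X Y)"
      proof (rule exI[of _ "nat \<lceil>2 * real f ^ 2 / D\<rceil> + 1"], intro allI impI)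
        fix n :: nat and V :: "nat set" and E X Y
        assume n: "nat \<lceil>2 * real f ^ 2 / D\<rceil> + 1 \<le> n"
          and HH: "npmu_graph k n p \<mu> V E \<and> X \<union> Y = V \<and> X \<inter> Y = {} \<and>
            real (card X) \<ge> \<zeta> * real n \<and> real (card Y) \<ge> \<zeta> * real n"
        have n1: "n \<ge> 1" using n by simp
        have "2 * real f ^ 2 / D \<le> real n" using n by linarith
        then have "2 * real f ^ 2 \<le> D * real n" using D0 by (simp add: pos_divide_le_eq mult.commute)
        then have nl: "real (card VF)^2 \<le> (p/2)^(card VF^k) * \<zeta>^(card VF) / 2 * real n"
          unfolding D_def f_def by simp
        have cardV: "card V = n" using HH unfolding npmu_graph_def by auto
        have rob: "(int (card {v\<in>VF. c v \<in> J}), int (f - card {v\<in>VF. c v \<in> J})) \<in> robust_vectors lam VF EF V E X Y"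
          if re: "kpartite_realisation k VF EF c" for c J
        proof -
          define a where "a = card {v\<in>VF. c v \<in> J}"
          have af: "a \<le> f" unfolding a_def f_def using finVF by (intro card_mono) auto
          have cc: "lam0 * real n ^ f \<le> real (card {F' \<in> copies VF EF V E. card (fst F' \<inter> X) = a
            \<and> card (fst F' \<inter> Y) = f - a})"
            using copies_count[OF kg re, where n=n and p=p and \<mu>=\<mu> and V=V and E=E and X=X and Y=Y and \<zeta>=\<zeta> and J=J] HH pz mu n1 nl
            unfolding lam0_def D_def a_def f_def by auto
          have "lam * real (card V) ^ card VF \<le> lam0 * real n ^ f"
            using lam cardV mult_right_mono[of lam lam0 "real n ^ card VF"] unfolding f_def by simp
          then have "lam * real (card V) ^ card VF \<le> real (card {F' \<in> copies VF EF V E. card (fst F' \<inter> X) = a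
            \<and> card (fst F' \<inter> Y) = f - a})" using cc by linarith
          then show ?thesis unfolding robust_vectors_def a_def[symmetric] f_def
            using af unfolding f_def
            by (intro CollectI exI[of _ a] exI[of _ "card VF - a"]) auto
        qed
        have key: "(int s, - int s) \<in> int_lattice (robust_vectors lam VF EF V E X Y)"
          if s: "s \<in> class_sizes k VF EF" for s
        proof -
          obtain c i where c: "kpartite_realisation k VF EF c" "i < k" "s = card {v\<in>VF. c v = i}"
            using s unfolding class_sizes_def by auto
          have e1: "{v\<in>VF. c v \<in> {i}} = {v\<in>VF. c v = i}" by auto
          have r1: "(int s, int (f - s)) \<in> robust_vectors lam VF EF V E X Y"
            using rob[OF c(1), of "{i}"] c(3) e1 by simp
          have r2: "(0, int f) \<in> robust_vectors lam VF EF V E X Y"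
            using rob[OF c(1), of "{}"] by simp
          have sf: "s \<le> f" unfolding c(3) f_def using finVF by (intro card_mono) auto
          have "(int s + (-1) * 0, int (f - s) + (-1) * int f) \<in> int_lattice (robust_vectors lam VF EF V E X Y)"
            by (intro lat_add lat_smul lat_mem r1 r2)
          then show ?thesis using sf by (simp add: of_nat_diff)
        qed
        show "(1, -1) \<in> int_lattice (robust_vectors lam VF EF V E X Y)"
          by (rule gcd_lattice[OF assms(4) key])
      qed
    qed
  qed
qed


end
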